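(* In the directed polymer on a disordered $d$-ary tree with non-disordered defect subtree described in the context, for every $\beta>0$ and every $u\in\mathbb{R}$, \[\limsup_{n\to\infty}\frac1n\log Z^{ST}_n(\beta,u)\leq\max\{\lambda(\beta)+\log d,\ \beta u+\log d_1\}\quad\text{a.s.}\]
   Context: Let $d\geq2$, $1\leq d_1<d$. $\mathbb{T}$ is the rooted $d$-ary tree with nodes $(k,j)$ ($k$ the generation, root $\mathbf 0=(0,1)$, children of $(k,j)$ are $(k+1,(j-1)d+\ell)$, $1\le\ell\le d$). $\tilde{\mathbb{T}}$ is the left-most $d_1$-regular subtree: it contains the root and, for $x=(k,j)\in\tilde{\mathbb{T}}$, the children $(k+1,d(j-1)+\ell)$, $1\le\ell\le d_1$. Let $V$ be a non-degenerate real random variable with $\lambda(\beta):=\log\mathbf{E}[e^{\beta V}]<\infty$ for all real $\beta$. Set $V(x)=u$ for $x\in\tilde{\mathbb{T}}$ and let $V(x)$, $x\in\mathbb{T}\setminus\tilde{\mathbb{T}}$, be i.i.d. copies of $V$. $Z^{ST}_n(\beta,u)=\sum_W\exp(\beta\sum_{y\in W\setminus\{\mathbf 0\}}V(y))$ over all directed paths $W$ from $\mathbf 0$ to generation $n$. *)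

theory Defs
  imports "HOL-Probability.Probability"
begin

text \<open>Nodes of the rooted d-ary tree: (k, j) with generation k and 1 \<le> j \<le> d^k.\<close>
type_synonym node = "nat \<times> nat"

definition tree_nodes :: "nat \<Rightarrow> node set" where
  "tree_nodes d = {(k, j). 1 \<le> j \<and> j \<le> d ^ k}"

definition root :: node where
  "root = (0, 1)"

definition is_child :: "nat \<Rightarrow> node \<Rightarrow> node \<Rightarrow> bool" where
  "is_child d x y \<longleftrightarrow> (\<exists>l. 1 \<le> l \<and> l \<le> d \<and> y = (Suc (fst x), (snd x - 1) * d + l))"

inductive_set defect_subtree :: "nat \<Rightarrow> nat \<Rightarrow> node set" for d d1 where
  root_in: "root \<in> defect_subtree d d1"
| child_in: "\<lbrakk>(k, j) \<in> defect_subtree d d1; 1 \<le> l; l \<le> d1\<rbrakk>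
              \<Longrightarrow> (Suc k, d * (j - 1) + l) \<in> defect_subtree d d1"

definition paths :: "nat \<Rightarrow> nat \<Rightarrow> node list set" where
  "paths d n = {ws. length ws = Suc n \<and> ws ! 0 = root \<and>
                    (\<forall>i<n. is_child d (ws ! i) (ws ! Suc i))}"

definition env_ST :: "nat \<Rightarrow> nat \<Rightarrow> real \<Rightarrow> (node \<Rightarrow> 'a \<Rightarrow> real) \<Rightarrow> node \<Rightarrow> 'a \<Rightarrow> real" where
  "env_ST d d1 u V x \<omega> = (if x \<in> defect_subtree d d1 then u else V x \<omega>)"

text \<open>Partition function Z^{ST}_n(beta,u); the root (index 0) is excluded from the energy.\<close>
definition Z_ST :: "nat \<Rightarrow> nat \<Rightarrow> (node \<Rightarrow> 'a \<Rightarrow> real) \<Rightarrow> nat \<Rightarrow> real \<Rightarrow> real \<Rightarrow> 'a \<Rightarrow> real" where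
  "Z_ST d d1 V n \<beta> u \<omega> =
     (\<Sum>ws\<in>paths d n. exp (\<beta> * (\<Sum>i\<in>{1..n}. env_ST d d1 u V (ws ! i) \<omega>)))"

definition log_mgf :: "real measure \<Rightarrow> real \<Rightarrow> real" where
  "log_mgf \<mu> \<beta> = ln (\<integral>v. exp (\<beta> * v) \<partial>\<mu>)"

end

theory Submission
  imports Defs
begin

definition chld :: "nat \<Rightarrow> node \<Rightarrow> nat \<Rightarrow> node" where
  "chld d x l = (Suc (fst x), (snd x - 1) * d + l)"

lemma ds_snd_pos: "x \<in> defect_subtree d d1 \<Longrightarrow> 1 \<le> snd x"
  by (induction rule: defect_subtree.induct) (auto simp: root_def)

lemma div_uniq:
  fixes a b l l' d :: nat
  assumes "1 \<le> l" "l \<le> d" "1 \<le> l'" "l' \<le> d" "a * d + l = b * d + l'"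
  shows "a = b \<and> l = l'"
proof -
  have False if "a < b"
    "1 \<le> l" "l \<le> d" "1 \<le> l'" "l' \<le> d" "a * d + l = b * d + l'" for a b l l' :: nat
  proof -
    have "(a + 1) * d \<le> b * d" using that by (intro mult_right_mono) auto
    then show False using that by (simp add: algebra_simps)
  qed
  then have "a = b" using assms by (metis linorder_neqE_nat)
  then show ?thesis using assms by simp
qed

lemma ds_inv:
  assumes "(Suc k, (j - 1) * d + l) \<in> defect_subtree d d1" "1 \<le> l" "l \<le> d" "1 \<le> j" "d1 \<le> d"
  shows "(k, j) \<in> defect_subtree d d1 \<and> l \<le> d1"
  using assms(1)
proof -
  have "\<exists>j' l'. (k, j') \<in> defect_subtree d d1 \<and> 1 \<le> l' \<and> l' \<le> d1 \<and> d*(j'-1)+l' = (j-1)*d+l"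
    using assms(1) by (rule defect_subtree.cases) (auto simp: root_def)
  then obtain j' l' where c: "(k, j') \<in> defect_subtree d d1" "1 \<le> l'" "l' \<le> d1" "d*(j'-1)+l' = (j-1)*d+l"
    by blast
  have j': "1 \<le> j'" using ds_snd_pos[OF c(1)] by simp
  have "(j' - 1) * d + l' = (j - 1) * d + l" using c by (simp add: mult.commute)
  then have "j' - 1 = j - 1 \<and> l' = l" using div_uniq[of l' d l "j'-1" "j-1"] c assms by auto
  then have "j' = j" using j' assms by linarith
  then show ?thesis using c \<open>j' - 1 = j - 1 \<and> l' = l\<close> by auto
qed

lemma paths_Suc:
  "paths d (Suc n) = (\<lambda>(ws, l). ws @ [chld d (last ws) l]) ` (paths d n \<times> {1..d})"
proof (intro set_eqI iffI)
  fix ws' assume H: "ws' \<in> paths d (Suc n)"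
  define ws where "ws = take (Suc n) ws'"
  have len: "length ws' = Suc (Suc n)" using H by (simp add: paths_def)
  have eq: "ws' = ws @ [ws' ! Suc n]" unfolding ws_def using len
    by (metis Suc_eq_plus1 lessI take_Suc_conv_app_nth take_all order_refl)
  have ch: "is_child d (ws' ! n) (ws' ! Suc n)" using H by (simp add: paths_def)
  then obtain l where l: "1 \<le> l" "l \<le> d" "ws' ! Suc n = chld d (ws' ! n) l"
    by (auto simp: is_child_def chld_def)
  have lastws: "last ws = ws' ! n" unfolding ws_def using len
    by (subst last_conv_nth) auto
  have "ws \<in> paths d n" using H len unfolding ws_def paths_def by auto
  then show "ws' \<in> (\<lambda>(ws, l). ws @ [chld d (last ws) l]) ` (paths d n \<times> {1..d})"
    using eq l lastws by (intro image_eqI[of _ _ "(ws, l)"]) auto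
next
  fix ws' assume "ws' \<in> (\<lambda>(ws, l). ws @ [chld d (last ws) l]) ` (paths d n \<times> {1..d})"
  then obtain ws l where ws: "ws \<in> paths d n" and l: "1 \<le> l" "l \<le> d"
    and eq: "ws' = ws @ [chld d (last ws) l]" by auto
  have len: "length ws = Suc n" using ws by (simp add: paths_def)
  have lastws: "last ws = ws ! n" using len by (metis last_conv_nth length_greater_0_conv zero_less_Suc diff_Suc_1)
  show "ws' \<in> paths d (Suc n)" unfolding paths_def
  proof (intro CollectI conjI allI impI)
    show "length ws' = Suc (Suc n)" using eq len by simp
    show "ws' ! 0 = root" using eq len ws by (simp add: paths_def nth_append)
    fix i assume "i < Suc n"
    then consider "i < n" | "i = n" by linarith
    then show "is_child d (ws' ! i) (ws' ! Suc i)"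
    proof cases
      case 1 then show ?thesis using ws eq len by (simp add: paths_def nth_append)
    next
      case 2 then show ?thesis using eq len l lastws
        by (auto simp: nth_append is_child_def chld_def)
    qed
  qed
qed

lemma paths_inj: "inj_on (\<lambda>(ws, l). ws @ [chld d (last ws) l]) (paths d n \<times> {1..d})"
  by (auto simp: inj_on_def chld_def)

lemma paths_0: "paths d 0 = {[root]}"
  by (auto simp: paths_def length_Suc_conv)

lemma finite_paths: "finite (paths d n)"
  by (induction n) (auto simp: paths_0 paths_Suc)

lemma sum_paths_Suc:
  "(\<Sum>ws\<in>paths d (Suc n). h ws) = (\<Sum>ws\<in>paths d n. \<Sum>l=1..d. h (ws @ [chld d (last ws) l]))"
  unfolding paths_Suc
  by (subst sum.reindex[OF paths_inj]) (simp add: sum.cartesian_product prod.case_distrib)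

lemma paths_nodes:
  assumes "ws \<in> paths d n" "i \<le> n"
  shows "ws ! i \<in> tree_nodes d \<and> fst (ws ! i) = i"
  using assms(2)
proof (induction i)
  case 0 then show ?case using assms(1) by (simp add: paths_def root_def tree_nodes_def)
next
  case (Suc i)
  then have IH: "ws ! i \<in> tree_nodes d" "fst (ws ! i) = i" by auto
  have "is_child d (ws ! i) (ws ! Suc i)" using assms(1) Suc by (simp add: paths_def)
  then obtain l where l: "1 \<le> l" "l \<le> d" "ws ! Suc i = (Suc (fst (ws!i)), (snd (ws!i) - 1) * d + l)"
    by (auto simp: is_child_def)
  obtain j where j: "ws ! i = (i, j)" "1 \<le> j" "j \<le> d ^ i" using IH by (cases "ws!i") (auto simp: tree_nodes_def)
  have "(j - 1) * d + l \<le> (d^i - 1) * d + d" using j l by (intro add_mono mult_right_mono) auto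
  also have "\<dots> = d ^ Suc i" using j by (cases "d^i") (auto simp: algebra_simps)
  finally show ?case using l j by (auto simp: tree_nodes_def)
qed

lemma paths_extend: "ws \<in> paths d n \<Longrightarrow> 1 \<le> l \<Longrightarrow> l \<le> d \<Longrightarrow> ws @ [chld d (last ws) l] \<in> paths d (Suc n)"
  unfolding paths_Suc by auto

lemma paths_nonempty: "1 \<le> d \<Longrightarrow> paths d n \<noteq> {}"
proof (induction n)
  case 0 then show ?case by (simp add: paths_0)
next
  case (Suc n) then obtain ws where "ws \<in> paths d n" by blast
  then show ?case using paths_extend[of ws d n 1] Suc by blast
qed

definition wt :: "(node \<Rightarrow> real) \<Rightarrow> node list \<Rightarrow> real" where
  "wt g ws = prod_list (map g (tl ws))"

lemma wt_snoc: "ws \<noteq> [] \<Longrightarrow> wt g (ws @ [c]) = wt g ws * g c"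
  by (cases ws) (auto simp: wt_def)

lemma wt_nonneg: "(\<And>x. 0 \<le> g x) \<Longrightarrow> 0 \<le> wt g ws"
  unfolding wt_def by (induction ws) (auto intro!: prod_list_nonneg)

lemma sum_le_d1:
  fixes c :: real assumes "d1 \<le> d"
  shows "(\<Sum>l=1..d. if l \<le> d1 then c else 0) = real d1 * c"
proof -
  have "(\<Sum>l=1..d. if l \<le> d1 then c else 0) = (\<Sum>l=1..d1. c)"
    using assms by (intro sum.mono_neutral_cong_right) auto
  then show ?thesis by simp
qed

lemma weight_bound:
  fixes A B Mx :: real
  assumes A: "0 \<le> A" and B: "0 \<le> B" and MA: "real d1 * A \<le> Mx" and MB: "real d * B \<le> Mx"
    and dd: "d1 \<le> d"
    and g: "\<And>x. g x = (if x \<in> defect_subtree d d1 then A else B)"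
  shows "(\<Sum>ws\<in>paths d n. if last ws \<in> defect_subtree d d1 then wt g ws else 0) \<le> Mx ^ n
       \<and> (\<Sum>ws\<in>paths d n. if last ws \<notin> defect_subtree d d1 then wt g ws else 0) \<le> real n * Mx ^ n"
proof (induction n)
  case 0 then show ?case unfolding paths_0 using defect_subtree.root_in[of d d1] by (simp add: wt_def)
next
  case (Suc n)
  let ?DS = "defect_subtree d d1"
  define Dn where "Dn = (\<Sum>ws\<in>paths d n. if last ws \<in> ?DS then wt g ws else 0)"
  define Nn where "Nn = (\<Sum>ws\<in>paths d n. if last ws \<notin> ?DS then wt g ws else 0)"
  have gnn: "\<And>x. 0 \<le> g x" using A B g by auto
  have Mnn: "0 \<le> Mx" using MB B by (smt (verit) of_nat_0_le_iff mult_nonneg_nonneg)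
  have Dn0: "0 \<le> Dn" unfolding Dn_def by (intro sum_nonneg) (auto intro: wt_nonneg gnn)
  have Nn0: "0 \<le> Nn" unfolding Nn_def by (intro sum_nonneg) (auto intro: wt_nonneg gnn)
  have IH: "Dn \<le> Mx ^ n" "Nn \<le> real n * Mx ^ n" using Suc unfolding Dn_def Nn_def by auto
  have lastinfo: "\<exists>j. last ws = (n, j) \<and> 1 \<le> j" if "ws \<in> paths d n" for ws
  proof -
    have len: "length ws = Suc n" using that by (simp add: paths_def)
    have "last ws = ws ! n" using len by (metis last_conv_nth length_greater_0_conv zero_less_Suc diff_Suc_1)
    then show ?thesis using paths_nodes[OF that, of n] by (cases "ws ! n") (auto simp: tree_nodes_def)
  qed
  have wsne: "ws \<noteq> []" if "ws \<in> paths d n" for ws using that by (auto simp: paths_def)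
  have D1: "(\<Sum>l=1..d. if last (ws @ [chld d (last ws) l]) \<in> ?DS then wt g (ws @ [chld d (last ws) l]) else 0)
      \<le> (if last ws \<in> ?DS then real d1 * A * wt g ws else 0)" if ws: "ws \<in> paths d n" for ws
  proof -
    obtain j where j: "last ws = (n, j)" "1 \<le> j" using lastinfo[OF ws] by blast
    have "(\<Sum>l=1..d. if last (ws @ [chld d (last ws) l]) \<in> ?DS then wt g (ws @ [chld d (last ws) l]) else 0)
        \<le> (\<Sum>l=1..d. if last ws \<in> ?DS \<and> l \<le> d1 then A * wt g ws else 0)"
    proof (intro sum_mono)
      fix l assume l: "l \<in> {1..d}"
      show "(if last (ws @ [chld d (last ws) l]) \<in> ?DS then wt g (ws @ [chld d (last ws) l]) else 0)
        \<le> (if last ws \<in> ?DS \<and> l \<le> d1 then A * wt g ws else 0)"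
      proof (cases "chld d (last ws) l \<in> ?DS")
        case True
        then have "(n, j) \<in> ?DS \<and> l \<le> d1" using ds_inv[of n j d l d1] j l dd by (auto simp: chld_def)
        then show ?thesis using True j wt_snoc[OF wsne[OF ws]] g by (simp add: mult.commute)
      next
        case False then show ?thesis using wt_nonneg[OF gnn] A by (auto intro: mult_nonneg_nonneg)
      qed
    qed
    also have "\<dots> = (if last ws \<in> ?DS then real d1 * A * wt g ws else 0)"
      using sum_le_d1[OF dd, of "A * wt g ws"] by (cases "last ws \<in> ?DS") (simp_all add: mult.assoc)
    finally show ?thesis .
  qed
  have N1: "(\<Sum>l=1..d. if last (ws @ [chld d (last ws) l]) \<notin> ?DS then wt g (ws @ [chld d (last ws) l]) else 0)
      \<le> real d * B * wt g ws" if ws: "ws \<in> paths d n" for ws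
  proof -
    have "(\<Sum>l=1..d. if last (ws @ [chld d (last ws) l]) \<notin> ?DS then wt g (ws @ [chld d (last ws) l]) else 0)
        \<le> (\<Sum>l=1..d. B * wt g ws)"
    proof (intro sum_mono)
      fix l
      have "0 \<le> B * wt g ws" using wt_nonneg[of g ws, OF gnn] B by simp
      then show "(if last (ws @ [chld d (last ws) l]) \<notin> ?DS then wt g (ws @ [chld d (last ws) l]) else 0) \<le> B * wt g ws"
        using wt_snoc[OF wsne[OF ws], of g] g by (auto simp: mult.commute)
    qed
    then show ?thesis by (simp add: mult.assoc)
  qed
  have "(\<Sum>ws\<in>paths d (Suc n). if last ws \<in> ?DS then wt g ws else 0)
      \<le> (\<Sum>ws\<in>paths d n. if last ws \<in> ?DS then real d1 * A * wt g ws else 0)"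
    unfolding sum_paths_Suc by (intro sum_mono D1)
  also have "\<dots> = real d1 * A * Dn" unfolding Dn_def sum_distrib_left
    by (intro sum.cong) auto
  also have "\<dots> \<le> Mx * Mx ^ n" using IH Dn0 MA A Mnn by (intro mult_mono) auto
  finally have R1: "(\<Sum>ws\<in>paths d (Suc n). if last ws \<in> ?DS then wt g ws else 0) \<le> Mx ^ Suc n" by simp
  have "(\<Sum>ws\<in>paths d (Suc n). if last ws \<notin> ?DS then wt g ws else 0)
      \<le> (\<Sum>ws\<in>paths d n. real d * B * wt g ws)"
    unfolding sum_paths_Suc by (intro sum_mono N1)
  also have "\<dots> = real d * B * (Dn + Nn)" unfolding Dn_def Nn_def sum_distrib_left sum.distrib[symmetric]
    by (intro sum.cong) auto
  also have "\<dots> \<le> Mx * (Mx ^ n + real n * Mx ^ n)" using IH Dn0 Nn0 MB B Mnn by (intro mult_mono add_mono) auto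
  also have "\<dots> = real (Suc n) * Mx ^ Suc n" by (simp add: algebra_simps)
  finally show ?case using R1 by simp
qed

lemma prod_list_tl:
  assumes "length ws = Suc n"
  shows "prod_list (map g (tl ws)) = (\<Prod>i\<in>{1..n}. g (ws ! i))"
proof -
  have "prod_list (map g (tl ws)) = (\<Prod>i\<in>{0..<n}. g (ws ! Suc i))"
    using assms by (simp add: prod.list_conv_set_nth nth_tl)
  also have "\<dots> = (\<Prod>i\<in>{1..n}. g (ws ! i))"
    by (simp add: prod.atLeast1_atMost_eq atLeast0LessThan)
  finally show ?thesis .
qed

lemma summable_lin_geom:
  fixes e :: real assumes "0 < e"
  shows "summable (\<lambda>n. (real n + 1) * exp (- e) ^ n)"
proof -
  define t where "t = min 1 (e / 2)"
  have t: "0 < t" "t \<le> 1" "t \<le> e / 2" using assms by (auto simp: t_def)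
  have bnd: "(real n + 1) * exp (- e) ^ n \<le> (1 / t) * exp (- (e / 2)) ^ n" for n
  proof -
    have "t * (real n + 1) \<le> 1 + real n * (e / 2)"
      using t by (smt (verit) mult_right_mono of_nat_0_le_iff distrib_left mult.commute mult_cancel_right1)
    also have "\<dots> \<le> exp (real n * (e / 2))" by (rule exp_ge_add_one_self)
    finally have h: "t * (real n + 1) \<le> exp (real n * (e / 2))" .
    have "(real n + 1) * exp (- e) ^ n = (real n + 1) * exp (- (real n * e))"
      by (simp add: exp_of_nat_mult[symmetric])
    also have "\<dots> \<le> (1 / t) * exp (real n * (e / 2)) * exp (- (real n * e))"
      using h t by (intro mult_right_mono) (auto simp: field_simps)
    also have "\<dots> = (1 / t) * exp (- (e / 2)) ^ n"
      by (simp add: exp_of_nat_mult[symmetric] mult.assoc exp_add[symmetric] algebra_simps)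
    finally show ?thesis .
  qed
  have "summable (\<lambda>n. (1 / t) * exp (- (e / 2)) ^ n)"
    using assms by (intro summable_mult summable_geometric) auto
  then show ?thesis
    by (rule summable_comparison_test'[where N=0]) (use bnd in auto)
qed

lemma weight_total:
  fixes A B Mx :: real
  assumes "0 \<le> A" "0 \<le> B" "real d1 * A \<le> Mx" "real d * B \<le> Mx" "d1 \<le> d"
    and "\<And>x. g x = (if x \<in> defect_subtree d d1 then A else B)"
  shows "(\<Sum>ws\<in>paths d n. wt g ws) \<le> (real n + 1) * Mx ^ n"
proof -
  have "(\<Sum>ws\<in>paths d n. wt g ws) = (\<Sum>ws\<in>paths d n. if last ws \<in> defect_subtree d d1 then wt g ws else 0)
     + (\<Sum>ws\<in>paths d n. if last ws \<notin> defect_subtree d d1 then wt g ws else 0)"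
    unfolding sum.distrib[symmetric] by (intro sum.cong) auto
  then show ?thesis using weight_bound[OF assms, of n] by (simp add: algebra_simps)
qed

theorem proposition2p7:
  fixes M :: "'a measure" and \<mu> :: "real measure"
    and V :: "node \<Rightarrow> 'a \<Rightarrow> real"
    and d d1 :: nat and \<beta> u :: real
  assumes "prob_space M"
    and "d \<ge> 2" and "1 \<le> d1" and "d1 < d"
    and law: "\<And>x. x \<in> tree_nodes d - defect_subtree d d1 \<Longrightarrow>
               V x \<in> borel_measurable M \<and> distr M borel (V x) = \<mu>"
    and indep: "prob_space.indep_vars M (\<lambda>_. borel) V (tree_nodes d - defect_subtree d d1)"
    and mgf_finite: "\<And>b. integrable \<mu> (\<lambda>v. exp (b * v))"
    and nondeg: "\<not> (\<exists>c. AE v in \<mu>. v = c)"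
    and "\<beta> > 0"
  shows "AE \<omega> in M.
           limsup (\<lambda>n. ereal (ln (Z_ST d d1 V n \<beta> u \<omega>) / real n))
             \<le> ereal (max (log_mgf \<mu> \<beta> + ln (real d)) (\<beta> * u + ln (real d1)))"
proof -
  interpret P: prob_space M by fact
  let ?DS = "defect_subtree d d1"
  let ?TN = "tree_nodes d - ?DS"
  define E where "E = (\<integral>v. exp (\<beta> * v) \<partial>\<mu>)"
  define g where "g x = (if x \<in> ?DS then exp (\<beta> * u) else E)" for x
  define a where "a = max (log_mgf \<mu> \<beta> + ln (real d)) (\<beta> * u + ln (real d1))"
  define Z where "Z n \<omega> = Z_ST d d1 V n \<beta> u \<omega>" for n \<omega>
  define F where "F ws \<omega> = exp (\<beta> * (\<Sum>i\<in>{1..length ws - 1}. env_ST d d1 u V (ws ! i) \<omega>))" for ws \<omega>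
  have ZF: "Z n \<omega> = (\<Sum>ws\<in>paths d n. F ws \<omega>)" for n \<omega>
    unfolding Z_def Z_ST_def F_def by (intro sum.cong) (auto simp: paths_def)
  have d1d: "d1 \<le> d" using assms by simp
  have x0: "(1, d) \<in> ?TN"
  proof
    show "(1, d) \<in> tree_nodes d" using assms by (simp add: tree_nodes_def)
    show "(1, d) \<notin> ?DS"
      using ds_inv[of 0 1 d d d1] assms by auto
  qed
  have Vmeas: "V x \<in> borel_measurable M" if "x \<in> ?TN" for x using law[OF that] by auto
  have expmeas: "(\<lambda>v::real. exp (\<beta> * v)) \<in> borel_measurable borel" by measurable
  have Eint: "integrable M (\<lambda>\<omega>. exp (\<beta> * V x \<omega>))" if x: "x \<in> ?TN" for x
  proof -
    have "integrable (distr M borel (V x)) (\<lambda>v. exp (\<beta> * v))" using law[OF x] mgf_finite by simp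
    then show ?thesis using integrable_distr_eq[OF Vmeas[OF x] expmeas] by simp
  qed
  have Eeq: "(\<integral>\<omega>. exp (\<beta> * V x \<omega>) \<partial>M) = E" if x: "x \<in> ?TN" for x
    using integral_distr[OF Vmeas[OF x] expmeas] law[OF x] by (simp add: E_def)
  have Epos: "0 < E"
  proof -
    have "E \<noteq> 0"
    proof
      assume "E = 0"
      then have "AE \<omega> in M. exp (\<beta> * V (1, d) \<omega>) = 0"
        using integral_nonneg_eq_0_iff_AE[OF Eint[OF x0]] Eeq[OF x0] by simp
      then have "AE \<omega> in M. False" by simp
      then show False by simp
    qed
    moreover have "0 \<le> E"
      using Eeq[OF x0] by (metis integral_nonneg_AE exp_ge_zero AE_I2)
    ultimately show ?thesis by simp
  qed
  have indep2: "P.indep_vars (\<lambda>_. borel) (\<lambda>x \<omega>. exp (\<beta> * V x \<omega>)) ?TN"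
    using P.indep_vars_compose2[OF indep, of "\<lambda>_ v. exp (\<beta> * v)" "\<lambda>_. borel"] expmeas by simp
  have path_int: "integrable M (F ws) \<and> (\<integral>\<omega>. F ws \<omega> \<partial>M) = wt g ws" if ws: "ws \<in> paths d n" for n ws
  proof -
    have len: "length ws = Suc n" using ws by (simp add: paths_def)
    define I1 where "I1 = {1..n} \<inter> {i. ws ! i \<in> ?DS}"
    define I2 where "I2 = {1..n} \<inter> - {i. ws ! i \<in> ?DS}"
    define S where "S = (\<lambda>i. ws ! i) ` I2"
    have inj: "inj_on (\<lambda>i. ws ! i) I2"
      by (rule inj_onI) (metis paths_nodes[OF ws] I2_def IntD1 atLeastAtMost_iff)
    have S_TN: "S \<subseteq> ?TN" unfolding S_def I2_def using paths_nodes[OF ws] by auto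
    have finS: "finite S" unfolding S_def I2_def by simp
    have reidx: "(\<Prod>x\<in>S. h x) = (\<Prod>i\<in>I2. h (ws ! i))" for h :: "node \<Rightarrow> real"
      unfolding S_def by (simp add: prod.reindex[OF inj])
    have Feq: "F ws \<omega> = (\<Prod>i\<in>I1. exp (\<beta> * u)) * (\<Prod>x\<in>S. exp (\<beta> * V x \<omega>))" for \<omega>
    proof -
      have "F ws \<omega> = (\<Prod>i\<in>{1..n}. exp (\<beta> * env_ST d d1 u V (ws ! i) \<omega>))"
        unfolding F_def len by (simp add: sum_distrib_left exp_sum)
      also have "\<dots> = (\<Prod>i\<in>{1..n}. if ws ! i \<in> ?DS then exp (\<beta> * u) else exp (\<beta> * V (ws ! i) \<omega>))"
        by (intro prod.cong) (auto simp: env_ST_def)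
      also have "\<dots> = (\<Prod>i\<in>I1. exp (\<beta> * u)) * (\<Prod>i\<in>I2. exp (\<beta> * V (ws ! i) \<omega>))"
        unfolding I1_def I2_def by (rule prod.If_cases) simp
      finally show ?thesis by (simp add: reidx)
    qed
    have indS: "P.indep_vars (\<lambda>_. borel) (\<lambda>x \<omega>. exp (\<beta> * V x \<omega>)) S"
      by (rule P.indep_vars_subset[OF indep2 S_TN])
    have intS: "integrable M (\<lambda>\<omega>. \<Prod>x\<in>S. exp (\<beta> * V x \<omega>))"
      using P.indep_vars_integrable[OF finS indS] Eint S_TN by auto
    have valS: "(\<integral>\<omega>. (\<Prod>x\<in>S. exp (\<beta> * V x \<omega>)) \<partial>M) = (\<Prod>x\<in>S. E)"
    proof -
      have "(\<integral>\<omega>. (\<Prod>x\<in>S. exp (\<beta> * V x \<omega>)) \<partial>M) = (\<Prod>x\<in>S. (\<integral>\<omega>. exp (\<beta> * V x \<omega>) \<partial>M))"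
        by (rule P.indep_vars_lebesgue_integral[OF finS indS]) (use Eint S_TN in blast)
      also have "\<dots> = (\<Prod>x\<in>S. E)" by (rule prod.cong) (use Eeq S_TN in auto)
      finally show ?thesis .
    qed
    have Fint: "integrable M (F ws)"
      unfolding Feq[abs_def] by (intro integrable_mult_right intS)
    have "(\<integral>\<omega>. F ws \<omega> \<partial>M) = (\<Prod>i\<in>I1. exp (\<beta> * u)) * (\<Prod>x\<in>S. E)"
      unfolding Feq by (simp add: valS)
    also have "\<dots> = (\<Prod>i\<in>{1..n}. g (ws ! i))"
    proof -
      have "(\<Prod>i\<in>{1..n}. g (ws ! i)) = (\<Prod>i\<in>{1..n}. if ws ! i \<in> ?DS then exp (\<beta> * u) else E)"
        by (simp add: g_def)
      also have "\<dots> = (\<Prod>i\<in>I1. exp (\<beta> * u)) * (\<Prod>i\<in>I2. E)"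
        unfolding I1_def I2_def by (rule prod.If_cases) simp
      finally show ?thesis using reidx[of "\<lambda>_. E"] by simp
    qed
    also have "\<dots> = wt g ws" unfolding wt_def by (rule prod_list_tl[OF len, symmetric])
    finally show ?thesis using Fint by simp
  qed
  have Mx: "exp a = max (real d * E) (real d1 * exp (\<beta> * u))"
  proof -
    have e1: "exp (log_mgf \<mu> \<beta> + ln (real d)) = real d * E"
    proof -
      have "log_mgf \<mu> \<beta> = ln E" by (simp add: log_mgf_def E_def)
      then show ?thesis using Epos assms by (simp add: exp_add mult.commute)
    qed
    have e2: "exp (\<beta> * u + ln (real d1)) = real d1 * exp (\<beta> * u)"
      using assms by (simp add: exp_add mult.commute)
    have e3: "exp (max x y) = max (exp x) (exp y)" for x y :: real
      by (cases "x \<le> y") (auto simp: max_def)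
    show ?thesis unfolding a_def by (simp only: e1 e2 e3)
  qed
  have Zint: "integrable M (Z n)" for n
    unfolding ZF[abs_def] by (rule Bochner_Integration.integrable_sum) (use path_int in blast)
  have EZ: "(\<integral>\<omega>. Z n \<omega> \<partial>M) \<le> (real n + 1) * exp (a * real n)" for n
  proof -
    have "(\<integral>\<omega>. Z n \<omega> \<partial>M) = (\<Sum>ws\<in>paths d n. wt g ws)"
      unfolding ZF by (subst Bochner_Integration.integral_sum) (use path_int in \<open>auto intro!: sum.cong\<close>)
    also have "\<dots> \<le> (real n + 1) * exp a ^ n"
      by (rule weight_total[OF _ _ _ _ d1d]) (use Epos Mx in \<open>auto simp: g_def\<close>)
    finally show ?thesis by (simp add: exp_of_nat_mult[symmetric] mult.commute)
  qed
  have Zpos: "0 < Z n \<omega>" for n \<omega>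
    unfolding ZF using paths_nonempty[of d n] assms finite_paths[of d n]
    by (intro sum_pos) (auto simp: F_def)
  have BC: "AE \<omega> in M. eventually (\<lambda>n. Z n \<omega> < exp ((a + e) * real n)) sequentially" if e: "0 < e" for e
  proof -
    define A where "A n = {\<omega>\<in>space M. exp ((a + e) * real n) \<le> Z n \<omega>}" for n
    have Zmeas: "Z n \<in> borel_measurable M" for n using Zint[of n] by auto
    have Ameas: "A n \<in> sets M" for n unfolding A_def using Zmeas[of n] by measurable
    have Abound: "measure M (A n) \<le> (real n + 1) * exp (- e) ^ n" for n
    proof -
      have "measure M (A n) \<le> (\<integral>\<omega>. Z n \<omega> \<partial>M) / exp ((a + e) * real n)"
        unfolding A_def using Zpos by (intro integral_Markov_inequality_measure[OF Zint Ameas]) (auto intro: less_imp_le)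
      also have "\<dots> \<le> (real n + 1) * exp (a * real n) / exp ((a + e) * real n)"
        by (intro divide_right_mono EZ) auto
      also have "\<dots> = (real n + 1) * exp (- e) ^ n"
      proof -
        have "exp (a * real n) / exp ((a + e) * real n) = exp (a * real n - (a + e) * real n)"
          by (rule exp_diff[symmetric])
        also have "a * real n - (a + e) * real n = real n * (- e)" by (simp add: algebra_simps)
        also have "exp (real n * (- e)) = exp (- e) ^ n" by (rule exp_of_nat_mult)
        finally show ?thesis by (metis times_divide_eq_right)
      qed
      finally show ?thesis .
    qed
    have "summable (\<lambda>n. measure M (A n))"
      by (rule summable_comparison_test'[where N=0, OF summable_lin_geom[OF e]]) (use Abound in auto)
    then have "AE \<omega> in M. eventually (\<lambda>n. \<omega> \<in> space M - A n) sequentially"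
      by (intro borel_cantelli_AE1 Ameas) (auto simp: P.emeasure_eq_measure)
    then show ?thesis
      by (rule AE_mp) (auto intro!: AE_I2 elim!: eventually_mono simp: A_def not_le)
  qed
  have "AE \<omega> in M. \<forall>m::nat. eventually (\<lambda>n. Z n \<omega> < exp ((a + 1 / real (Suc m)) * real n)) sequentially"
    unfolding AE_all_countable by (intro allI BC) simp
  then show ?thesis unfolding a_def[symmetric]
  proof (rule AE_mp, intro AE_I2 impI)
    fix \<omega> assume H: "\<forall>m::nat. eventually (\<lambda>n. Z n \<omega> < exp ((a + 1 / real (Suc m)) * real n)) sequentially"
    let ?L = "limsup (\<lambda>n. ereal (ln (Z_ST d d1 V n \<beta> u \<omega>) / real n))"
    have Lm: "?L \<le> ereal (a + 1 / real (Suc m))" for m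
    proof (rule Limsup_bounded)
      have "eventually (\<lambda>n. Z n \<omega> < exp ((a + 1 / real (Suc m)) * real n) \<and> 1 \<le> n) sequentially"
        using H eventually_ge_at_top[of 1] by (auto intro: eventually_conj)
      then show "eventually (\<lambda>n. ereal (ln (Z_ST d d1 V n \<beta> u \<omega>) / real n) \<le> ereal (a + 1 / real (Suc m))) sequentially"
      proof (rule eventually_mono)
        fix n assume n: "Z n \<omega> < exp ((a + 1 / real (Suc m)) * real n) \<and> 1 \<le> n"
        then have "ln (Z n \<omega>) < (a + 1 / real (Suc m)) * real n"
          using Zpos[of n \<omega>] by (metis ln_exp ln_less_cancel_iff exp_gt_zero)
        then have "ln (Z n \<omega>) / real n \<le> a + 1 / real (Suc m)"
          using n by (simp add: divide_le_eq less_imp_le)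
        then show "ereal (ln (Z_ST d d1 V n \<beta> u \<omega>) / real n) \<le> ereal (a + 1 / real (Suc m))"
          by (simp add: Z_def)
      qed
    qed
    show "?L \<le> ereal a"
    proof (rule ereal_le_epsilon2)
      fix e :: real assume "0 < e"
      then obtain m :: nat where m: "1 / real (Suc m) < e"
        by (metis reals_Archimedean of_nat_Suc inverse_eq_divide)
      have "?L \<le> ereal (a + 1 / real (Suc m))" by (rule Lm)
      also have "\<dots> \<le> ereal a + ereal e" using m by simp
      finally show "?L \<le> ereal a + ereal e" .
    qed
  qed
qed

end
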